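(* Let $\mathcal{X}$ and $\mathcal{Y}$ be finite sets, let $\Pr$ be a probability distribution on $\mathcal{X}$, let $\delta:\mathcal{X}\times\mathcal{Y}\to\mathbb{R}$, and let $\bar\pi,\pi_1,\dots,\pi_m$ be stochastic policies, each $\pi_i$ having support for $\bar\pi$. Let $\mathcal{D}=\bigcup_{i=1}^m\mathcal{D}^i$ be a log dataset in which, for each $i$, $\mathcal{D}^i$ consists of $n_i$ samples $(x^i_j,y^i_j,\delta^i_j,p^i_j)$, $j=1,\dots,n_i$, with $x^i_j\sim\Pr$, $y^i_j\sim\pi_i(\cdot\mid x^i_j)$, $\delta^i_j=\delta(x^i_j,y^i_j)$, $p^i_j=\pi_i(y^i_j\mid x^i_j)$, all draws independent; let $n=\sum_in_i$ and $\pi_{avg}(y\mid x)=\frac1n\sum_in_i\pi_i(y\mid x)$. Define $$\hat U_{naive}(\bar\pi)=\frac1n\sum_{i=1}^m\sum_{j=1}^{n_i}\delta^i_j\frac{\bar\pi(y^i_j\mid x^i_j)}{p^i_j},\qquad \hat U_{bal}(\bar\pi)=\frac1n\sum_{i=1}^m\sum_{j=1}^{n_i}\delta^i_j\frac{\bar\pi(y^i_j\mid x^i_j)}{\pi_{avg}(y^i_j\mid x^i_j)}.$$ Then $\mathrm{Var}_{\mathcal{D}}[\hat U_{bal}(\bar\pi)]\le\mathrm{Var}_{\mathcal{D}}[\hat U_{naive}(\bar\pi)]$.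
   Context: A stochastic policy $\pi$ assigns to each $x\in\mathcal{X}$ a probability distribution $\pi(\cdot\mid x)$ on $\mathcal{Y}$. A policy $\pi$ has support for a policy $\pi'$ if for all $x\in\mathcal{X},y\in\mathcal{Y}$, $\delta(x,y)\pi'(y\mid x)\neq0$ implies $\pi(y\mid x)>0$. Variances are taken over the random draw of $\mathcal{D}$. *)

theory Defs
  imports "HOL-Probability.Probability"
begin

type_synonym ('x, 'y) policy = "'x \<Rightarrow> 'y pmf"

definition has_support ::
  "('x \<Rightarrow> 'y \<Rightarrow> real) \<Rightarrow> ('x, 'y) policy \<Rightarrow> ('x, 'y) policy \<Rightarrow> bool" where
  "has_support \<delta> \<pi> \<pi>' \<longleftrightarrow>
     (\<forall>x y. \<delta> x y * pmf (\<pi>' x) y \<noteq> 0 \<longrightarrow> pmf (\<pi> x) y > 0)"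

text \<open>One logged sample from policy pi: x ~ Pr, y ~ pi(.|x). (delta and p are
  deterministic functions of (x,y) and are recomputed in the estimators.)\<close>
definition sample_pmf :: "'x pmf \<Rightarrow> ('x, 'y) policy \<Rightarrow> ('x \<times> 'y) pmf" where
  "sample_pmf Pr \<pi> = bind_pmf Pr (\<lambda>x. map_pmf (\<lambda>y. (x, y)) (\<pi> x))"

text \<open>Index set of the log dataset: sample j (j < n_i) of logging policy i (i < m).\<close>
definition log_index :: "nat \<Rightarrow> (nat \<Rightarrow> nat) \<Rightarrow> (nat \<times> nat) set" where
  "log_index m ns = {(i, j). i < m \<and> j < ns i}"

definition log_dataset_pmf ::
  "'x pmf \<Rightarrow> nat \<Rightarrow> (nat \<Rightarrow> nat) \<Rightarrow> (nat \<Rightarrow> ('x, 'y) policy) \<Rightarrow> (nat \<times> nat \<Rightarrow> 'x \<times> 'y) pmf" where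
  "log_dataset_pmf Pr m ns \<pi> = Pi_pmf (log_index m ns) undefined (\<lambda>(i, j). sample_pmf Pr (\<pi> i))"

definition total_n :: "nat \<Rightarrow> (nat \<Rightarrow> nat) \<Rightarrow> nat" where
  "total_n m ns = (\<Sum>i<m. ns i)"

definition pi_avg :: "nat \<Rightarrow> (nat \<Rightarrow> nat) \<Rightarrow> (nat \<Rightarrow> ('x, 'y) policy) \<Rightarrow> 'x \<Rightarrow> 'y \<Rightarrow> real" where
  "pi_avg m ns \<pi> x y = (1 / real (total_n m ns)) * (\<Sum>i<m. real (ns i) * pmf (\<pi> i x) y)"

definition U_naive ::
  "nat \<Rightarrow> (nat \<Rightarrow> nat) \<Rightarrow> (nat \<Rightarrow> ('x, 'y) policy) \<Rightarrow> ('x \<Rightarrow> 'y \<Rightarrow> real) \<Rightarrow> ('x, 'y) policy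
   \<Rightarrow> (nat \<times> nat \<Rightarrow> 'x \<times> 'y) \<Rightarrow> real" where
  "U_naive m ns \<pi> \<delta> \<pi>b D = (1 / real (total_n m ns)) *
     (\<Sum>i<m. \<Sum>j<ns i. let (x, y) = D (i, j) in \<delta> x y * (pmf (\<pi>b x) y / pmf (\<pi> i x) y))"

definition U_bal ::
  "nat \<Rightarrow> (nat \<Rightarrow> nat) \<Rightarrow> (nat \<Rightarrow> ('x, 'y) policy) \<Rightarrow> ('x \<Rightarrow> 'y \<Rightarrow> real) \<Rightarrow> ('x, 'y) policy
   \<Rightarrow> (nat \<times> nat \<Rightarrow> 'x \<times> 'y) \<Rightarrow> real" where
  "U_bal m ns \<pi> \<delta> \<pi>b D = (1 / real (total_n m ns)) *
     (\<Sum>i<m. \<Sum>j<ns i. let (x, y) = D (i, j) in \<delta> x y * (pmf (\<pi>b x) y / pi_avg m ns \<pi> x y))"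

end

theory Submission
  imports Defs
begin


lemma exp_fin:
  fixes f :: "'a \<Rightarrow> real"
  assumes "finite (set_pmf M)"
  shows "measure_pmf.expectation M f = (\<Sum>a\<in>set_pmf M. pmf M a * f a)"
  using integral_measure_pmf[OF assms, of M f] by simp

lemma exp_pair:
  fixes F :: "'a \<times> 'b \<Rightarrow> real"
  assumes "finite (set_pmf A)" "finite (set_pmf B)"
  shows "measure_pmf.expectation (pair_pmf A B) F =
     (\<Sum>a\<in>set_pmf A. \<Sum>b\<in>set_pmf B. pmf A a * pmf B b * F (a,b))"
proof -
  have "measure_pmf.expectation (pair_pmf A B) F = (\<Sum>z\<in>set_pmf A \<times> set_pmf B. pmf (pair_pmf A B) z * F z)"
    using assms by (simp add: exp_fin)
  also have "\<dots> = (\<Sum>z\<in>set_pmf A \<times> set_pmf B. pmf A (fst z) * pmf B (snd z) * F (fst z, snd z))"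
    by (intro sum.cong refl) (auto simp: pmf_pair)
  also have "\<dots> = (\<Sum>a\<in>set_pmf A. \<Sum>b\<in>set_pmf B. pmf A a * pmf B b * F (a,b))"
    by (simp add: sum.cartesian_product case_prod_beta)
  finally show ?thesis .
qed

lemma sum_pmf_set: "finite (set_pmf M) \<Longrightarrow> (\<Sum>a\<in>set_pmf M. pmf M a) = 1"
  by (rule sum_pmf_eq_1) auto

lemma var_pair:
  fixes X :: "'a \<Rightarrow> real" and Y :: "'b \<Rightarrow> real"
  assumes fA: "finite (set_pmf A)" and fB: "finite (set_pmf B)"
  shows "measure_pmf.variance (pair_pmf A B) (\<lambda>z. X (fst z) + Y (snd z))
       = measure_pmf.variance A X + measure_pmf.variance B Y"
proof -
  let ?mu = "measure_pmf.expectation A X" and ?nu = "measure_pmf.expectation B Y"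
  have iA: "integrable A f" for f :: "'a \<Rightarrow> real" using fA by (rule integrable_measure_pmf_finite)
  have iB: "integrable B f" for f :: "'b \<Rightarrow> real" using fB by (rule integrable_measure_pmf_finite)
  have E: "measure_pmf.expectation (pair_pmf A B) (\<lambda>z. X (fst z) + Y (snd z)) = ?mu + ?nu"
    by (subst Bochner_Integration.integral_add) (auto intro!: integrable_measure_pmf_finite simp: fA fB)
  have c1: "(\<Sum>a\<in>set_pmf A. pmf A a * (X a - ?mu)) = 0"
    using fA by (simp add: exp_fin right_diff_distrib sum_subtractf sum_distrib_right[symmetric] sum_pmf_set)
  have c2: "(\<Sum>b\<in>set_pmf B. pmf B b * (Y b - ?nu)) = 0"
    using fB by (simp add: exp_fin right_diff_distrib sum_subtractf sum_distrib_right[symmetric] sum_pmf_set)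
  have "measure_pmf.variance (pair_pmf A B) (\<lambda>z. X (fst z) + Y (snd z))
     = (\<Sum>a\<in>set_pmf A. \<Sum>b\<in>set_pmf B. pmf A a * pmf B b * ((X a - ?mu)^2 + (Y b - ?nu)^2 + 2 * ((X a - ?mu) * (Y b - ?nu))))"
    unfolding E using fA fB by (simp add: exp_pair power2_eq_square algebra_simps)
  also have "\<dots> = (\<Sum>a\<in>set_pmf A. pmf A a * (X a - ?mu)^2) * (\<Sum>b\<in>set_pmf B. pmf B b)
      + (\<Sum>a\<in>set_pmf A. pmf A a) * (\<Sum>b\<in>set_pmf B. pmf B b * (Y b - ?nu)^2)
      + 2 * ((\<Sum>a\<in>set_pmf A. pmf A a * (X a - ?mu)) * (\<Sum>b\<in>set_pmf B. pmf B b * (Y b - ?nu)))"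
  proof -
    have "\<And>a b. pmf A a * pmf B b * ((X a - ?mu)^2 + (Y b - ?nu)^2 + 2 * ((X a - ?mu) * (Y b - ?nu)))
       = pmf A a * (X a - ?mu)^2 * pmf B b + pmf A a * (pmf B b * (Y b - ?nu)^2)
        + 2 * ((pmf A a * (X a - ?mu)) * (pmf B b * (Y b - ?nu)))"
      by (simp add: algebra_simps)
    then show ?thesis
      by (simp only: sum.distrib sum_distrib_left[symmetric] sum_distrib_right[symmetric])
  qed
  also have "\<dots> = measure_pmf.variance A X + measure_pmf.variance B Y"
    using fA fB by (simp only: c1 c2 sum_pmf_set) (simp add: exp_fin)
  finally show ?thesis .
qed

lemma var_map:
  fixes F :: "'b \<Rightarrow> real"
  shows "measure_pmf.variance (map_pmf h M) F = measure_pmf.variance M (\<lambda>x. F (h x))"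
  by simp

lemma var_map':
  fixes F :: "'b \<Rightarrow> real"
  assumes "\<And>z. F (h z) = G z"
  shows "measure_pmf.variance (map_pmf h M) F = measure_pmf.variance M G"
  using assms by simp

lemma fin_Pi:
  assumes "finite I" "\<forall>a\<in>I. finite (set_pmf (p a))"
  shows "finite (set_pmf (Pi_pmf I d p))"
  using assms by (auto simp: set_Pi_pmf intro!: finite_PiE_dflt)

lemma var_Pi:
  fixes g :: "'i \<Rightarrow> 'b \<Rightarrow> real"
  assumes "finite I" "\<forall>a\<in>I. finite (set_pmf (p a))"
  shows "measure_pmf.variance (Pi_pmf I d p) (\<lambda>D. \<Sum>a\<in>I. g a (D a))
       = (\<Sum>a\<in>I. measure_pmf.variance (p a) (g a))"
  using assms
proof (induction I rule: finite_induct)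
  case empty
  then show ?case by simp
next
  case (insert x A)
  have eq: "(\<Sum>a\<in>insert x A. g a ((case z of (y, f) \<Rightarrow> f(x := y)) a))
     = g x (fst z) + (\<lambda>f. \<Sum>a\<in>A. g a (f a)) (snd z)" for z :: "'b \<times> ('i \<Rightarrow> 'b)"
  proof -
    obtain y f where z: "z = (y, f)" by (cases z)
    have "(\<Sum>a\<in>A. g a ((f(x := y)) a)) = (\<Sum>a\<in>A. g a (f a))"
      using insert.hyps by (intro sum.cong) auto
    then show "(\<Sum>a\<in>insert x A. g a ((case z of (y, f) \<Rightarrow> f(x := y)) a))
     = g x (fst z) + (\<lambda>f. \<Sum>a\<in>A. g a (f a)) (snd z)"
      using insert.hyps by (simp add: z)
  qed
  have "measure_pmf.variance (Pi_pmf (insert x A) d p) (\<lambda>D. \<Sum>a\<in>insert x A. g a (D a))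
      = measure_pmf.variance (pair_pmf (p x) (Pi_pmf A d p)) (\<lambda>z. g x (fst z) + (\<lambda>f. \<Sum>a\<in>A. g a (f a)) (snd z))"
    unfolding Pi_pmf_insert[OF insert.hyps] by (rule var_map') (rule eq)
  also have "\<dots> = measure_pmf.variance (p x) (g x) + measure_pmf.variance (Pi_pmf A d p) (\<lambda>f. \<Sum>a\<in>A. g a (f a))"
    by (rule var_pair) (use insert fin_Pi in auto)
  also have "\<dots> = (\<Sum>a\<in>insert x A. measure_pmf.variance (p a) (g a))"
    using insert by simp
  finally show ?case .
qed



lemma cs_weighted:
  fixes u e :: "nat \<Rightarrow> real"
  assumes "\<And>i. i \<in> A \<Longrightarrow> u i \<ge> 0" "finite A"
  shows "(\<Sum>i\<in>A. u i * e i)^2 \<le> (\<Sum>i\<in>A. u i) * (\<Sum>i\<in>A. u i * (e i)^2)"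
proof -
  have "0 \<le> (\<Sum>i\<in>A. \<Sum>j\<in>A. u i * u j * (e i - e j)^2)"
    using assms by (intro sum_nonneg mult_nonneg_nonneg) auto
  also have "\<dots> = (\<Sum>i\<in>A. \<Sum>j\<in>A. u i * (e i)^2 * u j + u i * (u j * (e j)^2) - 2 * (u i * e i) * (u j * e j))"
    by (intro sum.cong refl) (simp add: power2_eq_square algebra_simps)
  also have "\<dots> = (\<Sum>i\<in>A. u i * (e i)^2) * (\<Sum>j\<in>A. u j) + (\<Sum>i\<in>A. u i) * (\<Sum>j\<in>A. u j * (e j)^2) - 2 * ((\<Sum>i\<in>A. u i * e i) * (\<Sum>j\<in>A. u j * e j))"
    by (simp only: sum.distrib sum_subtractf sum_distrib_left[symmetric] sum_distrib_right[symmetric])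
  also have "\<dots> = 2 * ((\<Sum>i\<in>A. u i) * (\<Sum>i\<in>A. u i * (e i)^2)) - 2 * (\<Sum>i\<in>A. u i * e i)^2"
    by (simp add: power2_eq_square)
  finally show ?thesis by simp
qed

lemma key:
  fixes w c :: "'z::finite \<Rightarrow> real" and p :: "nat \<Rightarrow> 'z \<Rightarrow> real" and k :: "nat \<Rightarrow> real"
  assumes w: "\<And>z. w z \<ge> 0" and k: "\<And>i. k i \<ge> 0" and N: "N = (\<Sum>i<m. k i)" "N > 0"
    and supp: "\<And>z i. c z \<noteq> 0 \<Longrightarrow> i < m \<Longrightarrow> p i z > 0"
  shows "(\<Sum>i<m. k i * ((\<Sum>z\<in>UNIV. w z * p i z * (N * c z / (\<Sum>j<m. k j * p j z))^2) - (\<Sum>z\<in>UNIV. w z * p i z * (N * c z / (\<Sum>j<m. k j * p j z)))^2))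
       \<le> (\<Sum>i<m. k i * ((\<Sum>z\<in>UNIV. w z * p i z * (c z / p i z)^2) - (\<Sum>z\<in>UNIV. w z * p i z * (c z / p i z))^2))"
proof -
  define P where "P z = (\<Sum>j<m. k j * p j z)" for z
  define S where "S z = (\<Sum>i<m. k i / p i z)" for z
  define U where "U = (\<Sum>z\<in>UNIV. w z * c z)"
  define h where "h z = N * c z / P z" for z
  define Eh where "Eh i = (\<Sum>z\<in>UNIV. w z * p i z * h z)" for i
  have Ppos: "P z > 0" if "c z \<noteq> 0" for z
  proof -
    have "\<exists>i<m. k i > 0"
    proof (rule ccontr)
      assume "\<not> ?thesis"
      then have "\<forall>i<m. k i = 0" by (metis k less_eq_real_def)
      then have "N = 0" using N(1) by simp
      then show False using N(2) by simp
    qed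
    then obtain i0 where i0: "i0 < m" "k i0 > 0" by blast
    have "0 < k i0 * p i0 z" using i0 supp[OF that i0(1)] by simp
    also have "\<dots> \<le> P z" unfolding P_def
      using i0 k supp[OF that] by (intro member_le_sum) (auto intro!: mult_nonneg_nonneg simp: less_imp_le)
    finally show ?thesis .
  qed
  have g1: "(\<Sum>z\<in>UNIV. w z * p i z * (c z / p i z)) = U" if "i < m" for i
    unfolding U_def
  proof (intro sum.cong refl)
    fix z show "w z * p i z * (c z / p i z) = w z * c z"
      using supp[OF _ that, of z] by (cases "c z = 0") auto
  qed
  have g2: "w z * p i z * (c z / p i z)^2 = w z * (c z)^2 * (1 / p i z)" if "i < m" for i z
    using supp[OF _ that, of z] by (cases "c z = 0") (auto simp: power2_eq_square field_simps)
  have RHS: "(\<Sum>i<m. k i * ((\<Sum>z\<in>UNIV. w z * p i z * (c z / p i z)^2) - (\<Sum>z\<in>UNIV. w z * p i z * (c z / p i z))^2))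
      = (\<Sum>z\<in>UNIV. w z * (c z)^2 * S z) - N * U^2"
  proof -
    have "(\<Sum>i<m. k i * ((\<Sum>z\<in>UNIV. w z * p i z * (c z / p i z)^2) - (\<Sum>z\<in>UNIV. w z * p i z * (c z / p i z))^2))
       = (\<Sum>i<m. (\<Sum>z\<in>UNIV. k i * (w z * (c z)^2 * (1 / p i z))) - k i * U^2)"
    proof (intro sum.cong refl)
      fix i assume "i \<in> {..<m}"
      then have i: "i < m" by simp
      have e: "(\<Sum>z\<in>UNIV. w z * p i z * (c z / p i z)^2) = (\<Sum>z\<in>UNIV. w z * (c z)^2 * (1 / p i z))"
        by (intro sum.cong refl g2[OF i])
      show "k i * ((\<Sum>z\<in>UNIV. w z * p i z * (c z / p i z)^2) - (\<Sum>z\<in>UNIV. w z * p i z * (c z / p i z))^2)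
         = (\<Sum>z\<in>UNIV. k i * (w z * (c z)^2 * (1 / p i z))) - k i * U^2"
        unfolding e g1[OF i] by (simp only: right_diff_distrib sum_distrib_left)
    qed
    also have "\<dots> = (\<Sum>z\<in>UNIV. \<Sum>i<m. k i * (w z * (c z)^2 * (1 / p i z))) - N * U^2"
      by (simp add: sum_subtractf sum.swap[of _ "{..<m}"] N(1) sum_distrib_right)
    also have "\<dots> = (\<Sum>z\<in>UNIV. w z * (c z)^2 * S z) - N * U^2"
      unfolding S_def by (simp add: sum_distrib_left mult_ac)
    finally show ?thesis .
  qed
  have h2: "(\<Sum>i<m. k i * (\<Sum>z\<in>UNIV. w z * p i z * (h z)^2)) = (\<Sum>z\<in>UNIV. w z * (N^2 * (c z)^2 / P z))"
  proof -
    have "(\<Sum>i<m. k i * (\<Sum>z\<in>UNIV. w z * p i z * (h z)^2)) = (\<Sum>z\<in>UNIV. w z * P z * (h z)^2)"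
      unfolding P_def by (simp add: sum_distrib_left sum_distrib_right sum.swap[of _ "{..<m}"] mult_ac)
    also have "\<dots> = (\<Sum>z\<in>UNIV. w z * (N^2 * (c z)^2 / P z))"
    proof (intro sum.cong refl)
      fix z show "w z * P z * (h z)^2 = w z * (N^2 * (c z)^2 / P z)"
        using Ppos[of z] unfolding h_def by (cases "c z = 0") (auto simp: power2_eq_square field_simps)
    qed
    finally show ?thesis .
  qed
  have h1: "(\<Sum>i<m. k i * Eh i) = N * U"
  proof -
    have "(\<Sum>i<m. k i * Eh i) = (\<Sum>z\<in>UNIV. w z * P z * h z)"
      unfolding P_def Eh_def by (simp add: sum_distrib_left sum_distrib_right sum.swap[of _ "{..<m}"] mult_ac)
    also have "\<dots> = (\<Sum>z\<in>UNIV. N * (w z * c z))"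
    proof (intro sum.cong refl)
      fix z show "w z * P z * h z = N * (w z * c z)"
        using Ppos[of z] unfolding h_def by (cases "c z = 0") (auto simp: field_simps)
    qed
    finally show ?thesis unfolding U_def by (simp add: sum_distrib_left)
  qed
  have cs: "(N * U)^2 \<le> N * (\<Sum>i<m. k i * (Eh i)^2)"
    using cs_weighted[of "{..<m}" k Eh] k unfolding h1 N(1) by simp
  have cs': "N * U^2 \<le> (\<Sum>i<m. k i * (Eh i)^2)"
  proof -
    have "N * (N * U^2) \<le> N * (\<Sum>i<m. k i * (Eh i)^2)" using cs by (simp add: power2_eq_square mult_ac)
    then show ?thesis using N(2) by simp
  qed
  have pw: "w z * (N^2 * (c z)^2 / P z) \<le> w z * (c z)^2 * S z" for z
  proof (cases "c z = 0")
    case True then show ?thesis by simp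
  next
    case False
    have pz: "\<And>i. i < m \<Longrightarrow> p i z > 0" using supp[OF False] by blast
    have "N = (\<Sum>i<m. (k i / p i z) * p i z)" unfolding N(1)
    proof (intro sum.cong refl)
      fix i assume "i \<in> {..<m}"
      then have "p i z > 0" using pz by simp
      then show "k i = k i / p i z * p i z" by simp
    qed
    then have "N^2 \<le> (\<Sum>i<m. k i / p i z) * (\<Sum>i<m. (k i / p i z) * (p i z)^2)"
      using cs_weighted[of "{..<m}" "\<lambda>i. k i / p i z" "\<lambda>i. p i z"] k pz by (simp add: less_imp_le)
    also have "(\<Sum>i<m. (k i / p i z) * (p i z)^2) = P z"
      unfolding P_def using pz by (intro sum.cong refl) (auto simp: power2_eq_square)
    finally have "N^2 \<le> S z * P z" unfolding S_def .
    then have "N^2 / P z \<le> S z" using Ppos[OF False] by (simp add: divide_le_eq)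
    then have "(c z)^2 * (N^2 / P z) \<le> (c z)^2 * S z" by (intro mult_left_mono) auto
    then have "w z * ((c z)^2 * (N^2 / P z)) \<le> w z * ((c z)^2 * S z)" using w[of z] by (rule mult_left_mono)
    then show ?thesis by (simp add: mult_ac)
  qed
  have "(\<Sum>i<m. k i * ((\<Sum>z\<in>UNIV. w z * p i z * (N * c z / (\<Sum>j<m. k j * p j z))^2) - (\<Sum>z\<in>UNIV. w z * p i z * (N * c z / (\<Sum>j<m. k j * p j z)))^2))
     = (\<Sum>i<m. k i * (\<Sum>z\<in>UNIV. w z * p i z * (h z)^2)) - (\<Sum>i<m. k i * (Eh i)^2)"
    unfolding h_def P_def Eh_def by (simp add: right_diff_distrib sum_subtractf)
  also have "\<dots> \<le> (\<Sum>z\<in>UNIV. w z * (N^2 * (c z)^2 / P z)) - N * U^2"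
    unfolding h2 using cs' by linarith
  also have "\<dots> \<le> (\<Sum>z\<in>UNIV. w z * (c z)^2 * S z) - N * U^2"
    using sum_mono[of UNIV "\<lambda>z. w z * (N^2 * (c z)^2 / P z)" "\<lambda>z. w z * (c z)^2 * S z", OF pw] by linarith
  finally show ?thesis unfolding RHS .
qed



lemma pmf_sample:
  "pmf (sample_pmf Pr p) (x, y) = pmf Pr x * pmf (p x) y"
proof -
  have e: "pmf (map_pmf (\<lambda>y. (x', y)) (p x')) (x, y) = (if x' = x then pmf (p x) y else 0)" for x'
  proof (cases "x' = x")
    case True
    have "inj (Pair x)" by (auto intro: injI)
    from pmf_map_inj'[OF this, of "p x" y] show ?thesis using True by simp
  next
    case False
    then show ?thesis by (subst pmf_map_outside) auto
  qed
  have "pmf (sample_pmf Pr p) (x, y) = (\<integral>x'. (if x' = x then pmf (p x) y else 0) \<partial>measure_pmf Pr)"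
    unfolding sample_pmf_def pmf_bind e ..
  also have "\<dots> = (\<Sum>a\<in>{x}. (if a = x then pmf (p x) y else 0) * pmf Pr a)"
    by (rule integral_measure_pmf_real) (auto split: if_splits)
  finally show ?thesis by simp
qed

lemma var_sample:
  fixes f :: "'x::finite \<times> 'y::finite \<Rightarrow> real"
  shows "measure_pmf.variance (sample_pmf Pr p) f =
    (\<Sum>z\<in>UNIV. pmf Pr (fst z) * pmf (p (fst z)) (snd z) * (f z)^2)
    - (\<Sum>z\<in>UNIV. pmf Pr (fst z) * pmf (p (fst z)) (snd z) * f z)^2"
proof -
  have fin: "finite (set_pmf (sample_pmf Pr p))" by (rule finite_subset[OF subset_UNIV]) simp
  have E: "measure_pmf.expectation (sample_pmf Pr p) g = (\<Sum>z\<in>UNIV. pmf Pr (fst z) * pmf (p (fst z)) (snd z) * g z)"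
    for g :: "'x \<times> 'y \<Rightarrow> real"
    by (subst integral_measure_pmf[of UNIV]) (auto simp: pmf_sample[symmetric])
  show ?thesis
    by (subst measure_pmf.variance_eq) (auto intro!: integrable_measure_pmf_finite fin simp: E)
qed


lemma scale_V:
  fixes w :: "'z::finite \<Rightarrow> real"
  shows "(\<Sum>z\<in>UNIV. w z * (a * f z)^2) - (\<Sum>z\<in>UNIV. w z * (a * f z))^2
       = a^2 * ((\<Sum>z\<in>UNIV. w z * (f z)^2) - (\<Sum>z\<in>UNIV. w z * f z)^2)"
proof -
  have "(\<Sum>z\<in>UNIV. w z * (a * f z)^2) = a^2 * (\<Sum>z\<in>UNIV. w z * (f z)^2)"
    by (simp add: sum_distrib_left power_mult_distrib mult_ac)
  moreover have "(\<Sum>z\<in>UNIV. w z * (a * f z)) = a * (\<Sum>z\<in>UNIV. w z * f z)"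
    by (simp add: sum_distrib_left mult_ac)
  ultimately show ?thesis by (simp add: power_mult_distrib right_diff_distrib)
qed

theorem theorem5p3:
  fixes Pr :: "'x::finite pmf"
    and \<delta> :: "'x \<Rightarrow> 'y::finite \<Rightarrow> real"
    and \<pi>b :: "('x, 'y) policy"
    and \<pi> :: "nat \<Rightarrow> ('x, 'y) policy"
    and m :: nat and ns :: "nat \<Rightarrow> nat"
  assumes "\<forall>i<m. has_support \<delta> (\<pi> i) \<pi>b"
  shows "measure_pmf.variance (log_dataset_pmf Pr m ns \<pi>) (U_bal m ns \<pi> \<delta> \<pi>b)
         \<le> measure_pmf.variance (log_dataset_pmf Pr m ns \<pi>) (U_naive m ns \<pi> \<delta> \<pi>b)"
proof -
  define N where "N = real (total_n m ns)"
  show ?thesis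
  proof (cases "N = 0")
    case True
    then have "U_bal m ns \<pi> \<delta> \<pi>b = (\<lambda>D. 0)" "U_naive m ns \<pi> \<delta> \<pi>b = (\<lambda>D. 0)"
      by (auto simp: U_bal_def U_naive_def N_def fun_eq_iff)
    then show ?thesis by simp
  next
    case False
    then have Npos: "N > 0" unfolding N_def by simp
    define I where "I = log_index m ns"
    define q where "q = (\<lambda>a::nat\<times>nat. sample_pmf Pr (\<pi> (fst a)))"
    define w where "w z = pmf Pr (fst z)" for z :: "'x \<times> 'y"
    define p where "p i z = pmf (\<pi> i (fst z)) (snd z)" for i and z :: "'x \<times> 'y"
    define c where "c z = \<delta> (fst z) (snd z) * pmf (\<pi>b (fst z)) (snd z)" for z :: "'x \<times> 'y"
    define k where "k i = real (ns i)" for i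
    define V where "V i f = (\<Sum>z\<in>UNIV. w z * p i z * (f z)^2) - (\<Sum>z\<in>UNIV. w z * p i z * f z)^2"
      for i and f :: "'x \<times> 'y \<Rightarrow> real"
    have PP: "log_dataset_pmf Pr m ns \<pi> = Pi_pmf I undefined q"
      unfolding log_dataset_pmf_def I_def q_def by (simp add: case_prod_beta')
    have Iset: "I = Sigma {..<m} (\<lambda>i. {..<ns i})" unfolding I_def log_index_def by auto
    have finI: "finite I" unfolding Iset by auto
    have sumI: "(\<Sum>i<m. \<Sum>j<ns i. f (i,j)) = (\<Sum>a\<in>I. f a)" for f :: "nat \<times> nat \<Rightarrow> real"
      unfolding Iset by (simp add: sum.Sigma)
    have sumI2: "(\<Sum>a\<in>I. F (fst a)) = (\<Sum>i<m. k i * F i)" for F :: "nat \<Rightarrow> real"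
      using sumI[of "\<lambda>a. F (fst a)"] by (simp add: k_def)
    have finq: "\<forall>a\<in>I. finite (set_pmf (q a))" by (auto intro: finite_subset[OF subset_UNIV])
    have varq: "measure_pmf.variance (q a) f = V (fst a) f" for a f
      unfolding q_def V_def w_def p_def by (rule var_sample)
    have VarS: "measure_pmf.variance (Pi_pmf I undefined q) (\<lambda>D. \<Sum>a\<in>I. G (fst a) (D a))
        = (\<Sum>i<m. k i * V i (G i))" for G :: "nat \<Rightarrow> 'x \<times> 'y \<Rightarrow> real"
      by (subst var_Pi[OF finI finq]) (simp add: varq sumI2[of "\<lambda>i. V i (G i)", simplified])
    define Gn where "Gn i z = (1/N) * (c z / p i z)" for i z
    define P where "P z = (\<Sum>j<m. k j * p j z)" for z
    define Gb where "Gb i z = (1/N) * (N * c z / P z)" for i :: nat and z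
    have Un: "U_naive m ns \<pi> \<delta> \<pi>b = (\<lambda>D. \<Sum>a\<in>I. Gn (fst a) (D a))"
    proof
      fix D :: "nat \<times> nat \<Rightarrow> 'x \<times> 'y"
      have "U_naive m ns \<pi> \<delta> \<pi>b D = (1/N) * (\<Sum>i<m. \<Sum>j<ns i. c (D (i,j)) / p i (D (i,j)))"
        unfolding U_naive_def N_def c_def p_def
        by (simp add: Let_def case_prod_beta')
      also have "\<dots> = (\<Sum>a\<in>I. Gn (fst a) (D a))"
        unfolding Gn_def sum_distrib_left
        using sumI[of "\<lambda>a. 1 / N * (c (D a) / p (fst a) (D a))"] by simp
      finally show "U_naive m ns \<pi> \<delta> \<pi>b D = (\<Sum>a\<in>I. Gn (fst a) (D a))" .
    qed
    have pavg: "pi_avg m ns \<pi> x y = (1/N) * P (x,y)" for x y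
      unfolding pi_avg_def N_def P_def k_def p_def by simp
    have Ub: "U_bal m ns \<pi> \<delta> \<pi>b = (\<lambda>D. \<Sum>a\<in>I. Gb (fst a) (D a))"
    proof
      fix D :: "nat \<times> nat \<Rightarrow> 'x \<times> 'y"
      have e: "(let (x, y) = z in \<delta> x y * (pmf (\<pi>b x) y / pi_avg m ns \<pi> x y)) = N * c z / P z" for z
      proof (cases z)
        case (Pair x y)
        then show ?thesis unfolding pavg c_def using False by simp
      qed
      have "U_bal m ns \<pi> \<delta> \<pi>b D = (1/N) * (\<Sum>i<m. \<Sum>j<ns i. N * c (D (i,j)) / P (D (i,j)))"
        unfolding U_bal_def N_def[symmetric] by (intro arg_cong[where f="\<lambda>t. 1/N*t"] sum.cong refl e)
      also have "\<dots> = (\<Sum>a\<in>I. Gb (fst a) (D a))"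
        unfolding Gb_def sum_distrib_left
        using sumI[of "\<lambda>a. 1 / N * (N * c (D a) / P (D a))"] by simp
      finally show "U_bal m ns \<pi> \<delta> \<pi>b D = (\<Sum>a\<in>I. Gb (fst a) (D a))" .
    qed
    have Vs: "V i (\<lambda>z. (1/N) * f z) = (1/N)^2 * V i f" for i f
      unfolding V_def using scale_V[of "\<lambda>z. w z * p i z" "1/N" f] by (simp add: mult_ac)
    have Nk: "N = (\<Sum>i<m. k i)" unfolding N_def k_def total_n_def by simp
    have supp: "p i z > 0" if "c z \<noteq> 0" "i < m" for z i
      using assms that unfolding has_support_def c_def p_def by auto
    have K: "(\<Sum>i<m. k i * V i (\<lambda>z. N * c z / P z)) \<le> (\<Sum>i<m. k i * V i (\<lambda>z. c z / p i z))"
      unfolding V_def P_def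
      by (rule key[OF _ _ Nk Npos supp]) (auto simp: w_def k_def)
    have "measure_pmf.variance (log_dataset_pmf Pr m ns \<pi>) (U_bal m ns \<pi> \<delta> \<pi>b)
        = (1/N)^2 * (\<Sum>i<m. k i * V i (\<lambda>z. N * c z / P z))"
    proof -
      have "\<And>i. Gb i = (\<lambda>z. (1/N) * (N * c z / P z))" by (simp add: fun_eq_iff Gb_def)
      then show ?thesis unfolding PP Ub VarS by (simp only: Vs) (simp add: sum_distrib_left mult_ac)
    qed
    also have "\<dots> \<le> (1/N)^2 * (\<Sum>i<m. k i * V i (\<lambda>z. c z / p i z))"
      by (rule mult_left_mono[OF K]) simp
    also have "\<dots> = measure_pmf.variance (log_dataset_pmf Pr m ns \<pi>) (U_naive m ns \<pi> \<delta> \<pi>b)"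
    proof -
      have "\<And>i. Gn i = (\<lambda>z. (1/N) * (c z / p i z))" by (simp add: fun_eq_iff Gn_def)
      then show ?thesis unfolding PP Un VarS by (simp only: Vs) (simp add: sum_distrib_left mult_ac)
    qed
    finally show ?thesis .
  qed
qed

end
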